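(* For $m,n\in \mathbb{Z}_{>1}$, we have \begin{align*} \zeta(m)\zeta(n)-\zeta(m+n)=P(m,n)+P(n,m), \end{align*} where $P(m,n):=\sum^{m-1}_{i=0}(-1)^{i}\binom{n+i-1}{i}\zeta(n+i)\zeta_{\sqcup\!\sqcup}(m-i)+(-1)^{m}\sum^{n-1}_{j=0}\binom{m+j-1}{j}\bigl\{\zeta(m+j)\zeta_{\sqcup\!\sqcup}(n-j)-\zeta^{\star}(n-j,m+j)\bigr\}$, and \begin{align*} \zeta(m, n)=&\sum^{m-1}_{i=0}(-1)^{i}\binom{n+i-1}{i}\Bigl\{\zeta_{*}(n+i, m-i)+\zeta(m-i, n+i)+\zeta(m+n)\Bigr\}\\ &+(-1)^{m}\sum^{n-1}_{j=0}\binom{m+j-1}{j}\zeta_{*}(m+j, n-j). \end{align*}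
   Context: For $n\in\mathbb{Z}_{>0}$, $m\in\mathbb{Z}_{>1}$: $\zeta(m)=\sum_{k\ge1}k^{-m}$, $\zeta(n,m)=\sum_{0<k_1<k_2}k_1^{-n}k_2^{-m}$, $\zeta^\star(n,m)=\sum_{0<k_1\le k_2}k_1^{-n}k_2^{-m}=\zeta(n,m)+\zeta(m+n)$. Shuffle regularized values: for $m\in\mathbb{Z}_{>0}$, as $\epsilon\to0$, $\sum_{k>0}(1-\epsilon)^k/k^m\sim c_0+c_1(-\log\epsilon)$ and $\zeta_{\sqcup\!\sqcup}(m):=c_0+c_1T\in\mathbb{R}[T]$; so $\zeta_{\sqcup\!\sqcup}(1)=T$, $\zeta_{\sqcup\!\sqcup}(m)=\zeta(m)$ for $m>1$. Harmonic regularized values: for $m,n\in\mathbb{Z}_{>0}$, as $N\to\infty$, $\sum_{0<k_1<k_2<N}k_1^{-m}k_2^{-n}\sim b_0+b_1(\log N+\gamma)+b_2(\log N+\gamma)^2$ ($\gamma$ Euler's constant) and $\zeta_{*}(m,n):=b_0+b_1T+b_2T^2\in\mathbb{R}[T]$; $\zeta_*(m,n)=\zeta(m,n)$ when $n>1$. The identities are equalities in $\mathbb{R}[T]$. *)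

theory Defs
  imports "HOL-Analysis.Analysis" "HOL-Computational_Algebra.Polynomial"
begin

text \<open>Riemann zeta value zeta(m) = sum_{k>=1} k^{-m} (meaningful for m > 1).\<close>
definition zeta :: "nat \<Rightarrow> real" where
  "zeta m = (\<Sum>k. 1 / real (k + 1) ^ m)"

definition mzv2 :: "nat \<Rightarrow> nat \<Rightarrow> real" where
  "mzv2 n m = (\<Sum>\<^sub>\<infinity>(k1, k2) \<in> {(k1, k2). 0 < k1 \<and> k1 < k2}.
      1 / (real k1 ^ n * real k2 ^ m))"

definition mzv2_star :: "nat \<Rightarrow> nat \<Rightarrow> real" where
  "mzv2_star n m = (\<Sum>\<^sub>\<infinity>(k1, k2) \<in> {(k1, k2). 0 < k1 \<and> k1 \<le> k2}.
      1 / (real k1 ^ n * real k2 ^ m))"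

definition zeta_sh :: "nat \<Rightarrow> real poly" where
  "zeta_sh m = (THE p. degree p \<le> 1 \<and>
      ((\<lambda>\<epsilon>. (\<Sum>k. (1 - \<epsilon>) ^ (k + 1) / real (k + 1) ^ m) - poly p (- ln \<epsilon>))
        \<longlongrightarrow> 0) (at_right 0))"

definition zeta_st :: "nat \<Rightarrow> nat \<Rightarrow> real poly" where
  "zeta_st m n = (THE p. degree p \<le> 2 \<and>
      ((\<lambda>N::nat. (\<Sum>k2\<in>{1..<N}. \<Sum>k1\<in>{1..<k2}. 1 / (real k1 ^ m * real k2 ^ n))
          - poly p (ln (real N) + euler_mascheroni)) \<longlongrightarrow> 0) at_top)"

definition P_poly :: "nat \<Rightarrow> nat \<Rightarrow> real poly" where
  "P_poly m n =
     (\<Sum>i<m. (-1) ^ i * of_nat ((n + i - 1) choose i) * [:zeta (n + i):] * zeta_sh (m - i))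
     + (-1) ^ m * (\<Sum>j<n. of_nat ((m + j - 1) choose j) *
          ([:zeta (m + j):] * zeta_sh (n - j) - [:mzv2_star (n - j) (m + j):]))"

end

theory Submission
  imports Defs "HOL-Real_Asymp.Real_Asymp"
begin

lemma rsum: "(\<Sum>j\<le>k. ((m + j - 1) choose j)) = (m + k) choose k"
proof (induction k)
  case 0 then show ?case by simp
next
  case (Suc k)
  have "(\<Sum>j\<le>Suc k. ((m + j - 1) choose j)) = ((m + k) choose k) + ((m + k) choose (Suc k))"
    using Suc by simp
  also have "\<dots> = Suc (m + k) choose Suc k" by simp
  finally show ?case by simp
qed

lemma rsum2: assumes "n \<ge> 1" shows "(\<Sum>j<n. ((m + j - 1) choose j)) = (n + m - 1) choose m"
proof -
  have e: "{..<n} = {..n-1}" using assms by auto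
  have "(\<Sum>j<n. ((m + j - 1) choose j)) = (m + (n-1)) choose (n-1)" unfolding e by (rule rsum)
  also have "\<dots> = (m + (n-1)) choose m"
    using binomial_symmetric[of "n-1" "m + (n-1)"] by simp
  finally show ?thesis using assms by (simp add: add.commute)
qed

lemma reidx: fixes f :: "nat \<Rightarrow> nat \<Rightarrow> 'a::comm_monoid_add" and n :: nat shows "(\<Sum>j<n. \<Sum>l<n-j. f j (j+l)) = (\<Sum>k<n. \<Sum>j\<le>k. f j k)"
proof (induction n)
  case 0 then show ?case by simp
next
  case (Suc n)
  have "(\<Sum>j<Suc n. \<Sum>l<Suc n-j. f j (j+l)) = (\<Sum>j<Suc n. (\<Sum>l<n-j. f j (j+l)) + (if j \<le> n then f j n else 0))"
  proof (rule sum.cong)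
    fix j assume "j \<in> {..<Suc n}"
    then have "Suc n - j = Suc (n - j)" by auto
    then show "(\<Sum>l<Suc n-j. f j (j+l)) = (\<Sum>l<n-j. f j (j+l)) + (if j \<le> n then f j n else 0)"
      using \<open>j \<in> {..<Suc n}\<close> by simp
  qed simp
  also have "\<dots> = (\<Sum>j<Suc n. \<Sum>l<n-j. f j (j+l)) + (\<Sum>j\<le>n. f j n)"
    by (simp add: sum.distrib lessThan_Suc_atMost)
  also have "(\<Sum>j<Suc n. \<Sum>l<n-j. f j (j+l)) = (\<Sum>j<n. \<Sum>l<n-j. f j (j+l))"
    by simp
  finally show ?case using Suc by simp
qed

lemma pf1:
  fixes x y :: real assumes "x > 0" "y > 0"
  shows "(\<Sum>l<k. 1/(y^(l+1)*(x+y)^(k-l))) = 1/(x*y^k) - 1/(x*(x+y)^k)"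
proof (induction k)
  case 0 then show ?case by simp
next
  case (Suc k)
  have "(\<Sum>l<Suc k. 1/(y^(l+1)*(x+y)^(Suc k-l))) = (\<Sum>l<k. (1/(x+y)) * (1/(y^(l+1)*(x+y)^(k-l)))) + 1/(y^(k+1)*(x+y))"
  proof -
    have e: "\<And>l. l < k \<Longrightarrow> 1/(y^(l+1)*(x+y)^(Suc k-l)) = (1/(x+y)) * (1/(y^(l+1)*(x+y)^(k-l)))"
    proof -
      fix l assume "l < k"
      then have "(x+y)^(Suc k-l) = (x+y)*(x+y)^(k-l)" by (simp add: Suc_diff_le)
      then show "1/(y^(l+1)*(x+y)^(Suc k-l)) = (1/(x+y)) * (1/(y^(l+1)*(x+y)^(k-l)))" by simp
    qed
    have "(\<Sum>l<Suc k. 1/(y^(l+1)*(x+y)^(Suc k-l))) = (\<Sum>l<k. 1/(y^(l+1)*(x+y)^(Suc k-l))) + 1/(y^(k+1)*(x+y))"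
      by simp
    also have "(\<Sum>l<k. 1/(y^(l+1)*(x+y)^(Suc k-l))) = (\<Sum>l<k. (1/(x+y)) * (1/(y^(l+1)*(x+y)^(k-l))))"
      by (rule sum.cong[OF refl]) (rule e, simp)
    finally show ?thesis .
  qed
  also have "\<dots> = (1/(x+y)) * (1/(x*y^k) - 1/(x*(x+y)^k)) + 1/(y^(k+1)*(x+y))"
    by (subst sum_distrib_left[symmetric], subst Suc.IH, rule refl)
  also have "\<dots> = 1/(x*y^Suc k) - 1/(x*(x+y)^Suc k)"
  proof -
    have g: "\<And>(a::real) (b::real). a > 0 \<Longrightarrow> b > 0 \<Longrightarrow> (1/(x+y)) * (1/(x*a) - 1/(x*b)) + 1/((y*a)*(x+y)) = 1/(x*(y*a)) - 1/(x*((x+y)*b))"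
      using assms by (simp add: divide_simps) (simp add: algebra_simps)
    show ?thesis using g[of "y^k" "(x+y)^k"] assms by simp
  qed
  finally show ?case .
qed

lemma pf:
  fixes x y :: real assumes "x > 0" "y > 0" "n \<ge> 1"
  shows "1/(x^m*(x+y)^n) = (\<Sum>i<m. (-1)^i * real ((n+i-1) choose i) * (1/(x^(m-i)*y^(n+i))))
          + (-1)^m * (\<Sum>j<n. real ((m+j-1) choose j) * (1/(y^(m+j)*(x+y)^(n-j))))"
proof (induction m)
  case 0
  have "(\<Sum>j<n. real ((j-1) choose j) * (1/(y^j*(x+y)^(n-j)))) = (\<Sum>j\<in>{0}. real ((j-1) choose j) * (1/(y^j*(x+y)^(n-j))))"
    using assms(3) by (intro sum.mono_neutral_right) auto
  then show ?case by simp
next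
  case (Suc m)
  define c where "c i = real ((n+i-1) choose i)" for i
  define b where "b j = real ((m+j-1) choose j)" for j
  define A where "A = (\<Sum>i<m. (-1)^i * c i * (1/(x^(m-i)*y^(n+i))))"
  define B where "B = (\<Sum>j<n. b j * (1/(y^(m+j)*(x+y)^(n-j))))"
  have IH: "1/(x^m*(x+y)^n) = A + (-1)^m * B" using Suc unfolding A_def B_def c_def b_def by simp
  have "1/(x^Suc m*(x+y)^n) = (1/x) * (1/(x^m*(x+y)^n))" by simp
  also have "\<dots> = (1/x)*A + (-1)^m * ((1/x)*B)" unfolding IH by (simp add: algebra_simps)
  also have "(1/x)*A = (\<Sum>i<m. (-1)^i * c i * (1/(x^(Suc m-i)*y^(n+i))))"
    unfolding A_def sum_distrib_left
  proof (rule sum.cong[OF refl])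
    fix i assume "i \<in> {..<m}"
    then have "x^(Suc m - i) = x * x^(m-i)" by (simp add: Suc_diff_le)
    then show "1/x * ((-1)^i * c i * (1/(x^(m-i)*y^(n+i)))) = (-1)^i * c i * (1/(x^(Suc m-i)*y^(n+i)))"
      by simp
  qed
  also have "(1/x)*B = (\<Sum>j<n. b j * (1/(y^(m+j))) * (1/(x*y^(n-j)) - (\<Sum>l<n-j. 1/(y^(l+1)*(x+y)^(n-j-l)))))"
    unfolding B_def sum_distrib_left
  proof (rule sum.cong[OF refl])
    fix j assume "j \<in> {..<n}"
    show "1/x * (b j * (1/(y^(m+j)*(x+y)^(n-j)))) = b j * (1/(y^(m+j))) * (1/(x*y^(n-j)) - (\<Sum>l<n-j. 1/(y^(l+1)*(x+y)^(n-j-l))))"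
      unfolding pf1[OF assms(1,2)] by simp
  qed
  also have "\<dots> = (\<Sum>j<n. b j) * (1/(x*y^(m+n))) - (\<Sum>j<n. \<Sum>l<n-j. b j * (1/(y^(Suc m + (j+l))*(x+y)^(n-(j+l)))))"
  proof -
    have "\<And>j. j < n \<Longrightarrow> b j * (1/(y^(m+j))) * (1/(x*y^(n-j)) - (\<Sum>l<n-j. 1/(y^(l+1)*(x+y)^(n-j-l))))
       = b j * (1/(x*y^(m+n))) - (\<Sum>l<n-j. b j * (1/(y^(Suc m + (j+l))*(x+y)^(n-(j+l)))))"
    proof -
      fix j assume "j < n"
      have e1: "y^(m+j) * y^(n-j) = y^(m+n)" using \<open>j < n\<close> by (simp add: power_add[symmetric])
      have e2: "\<And>l. y^(m+j) * y^(l+1) = y^(Suc m + (j+l))" by (simp add: power_add[symmetric] add.assoc)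
      have "b j * (1/(y^(m+j))) * (1/(x*y^(n-j))) = b j * (1/(x*y^(m+n)))"
        using e1[symmetric] by simp
      moreover have "b j * (1/(y^(m+j))) * (\<Sum>l<n-j. 1/(y^(l+1)*(x+y)^(n-j-l))) = (\<Sum>l<n-j. b j * (1/(y^(Suc m + (j+l))*(x+y)^(n-(j+l)))))"
        unfolding sum_distrib_left
      proof (rule sum.cong[OF refl])
        fix l
        show "b j * (1 / y ^ (m + j)) * (1 / (y ^ (l + 1) * (x + y) ^ (n - j - l))) = b j * (1 / (y ^ (Suc m + (j + l)) * (x + y) ^ (n - (j + l))))"
          using e2[of l, symmetric] by (simp add: diff_diff_add power_add add.assoc)
      qed
      ultimately show "b j * (1/(y^(m+j))) * (1/(x*y^(n-j)) - (\<Sum>l<n-j. 1/(y^(l+1)*(x+y)^(n-j-l))))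
       = b j * (1/(x*y^(m+n))) - (\<Sum>l<n-j. b j * (1/(y^(Suc m + (j+l))*(x+y)^(n-(j+l)))))"
        by (simp add: right_diff_distrib)
    qed
    then show ?thesis by (simp add: sum_subtractf sum_distrib_right sum_divide_distrib)
  qed
  also have "(\<Sum>j<n. \<Sum>l<n-j. b j * (1/(y^(Suc m + (j+l))*(x+y)^(n-(j+l)))))
      = (\<Sum>k<n. (\<Sum>j\<le>k. b j) * (1/(y^(Suc m + k)*(x+y)^(n-k))))"
    unfolding reidx[where f = "\<lambda>j k. b j * (1/(y^(Suc m + k)*(x+y)^(n-k)))"] sum_distrib_right ..
  also have "(\<Sum>j<n. b j) = c m"
    unfolding b_def c_def using rsum2[OF assms(3), of m] by (simp flip: of_nat_sum)
  finally have F: "1/(x^Suc m*(x+y)^n) = (\<Sum>i<m. (-1)^i * c i * (1/(x^(Suc m-i)*y^(n+i)))) + (-1)^m * (c m * (1/(x*y^(m+n))) -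
       (\<Sum>k<n. (\<Sum>j\<le>k. b j) * (1/(y^(Suc m + k)*(x+y)^(n-k)))))" .
  have bk: "\<And>k. (\<Sum>j\<le>k. b j) = real ((Suc m + k - 1) choose k)"
    unfolding b_def using rsum[of m] by (simp flip: of_nat_sum)
  show ?case
    unfolding F bk c_def by (simp add: algebra_simps)
qed

definition ZN :: "nat \<Rightarrow> nat \<Rightarrow> real" where "ZN N a = (\<Sum>k\<in>{1..<N}. 1/real k^a)"
definition DD :: "nat \<Rightarrow> (nat \<times> nat) set" where "DD N = {(k1,k2). 0<k1 \<and> k1<k2 \<and> k2<N}"
definition DS :: "nat \<Rightarrow> (nat \<times> nat) set" where "DS N = {(k1,k2). 0<k1 \<and> k1\<le>k2 \<and> k2<N}"
definition TT :: "nat \<Rightarrow> (nat \<times> nat) set" where "TT N = {(x,y). 0<x \<and> 0<y \<and> x+y<N}"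
definition RR :: "nat \<Rightarrow> (nat \<times> nat) set" where "RR N = {(x,y). 0<x \<and> 0<y \<and> x<N \<and> y<N \<and> N \<le> x+y}"
definition SN :: "nat \<Rightarrow> nat \<Rightarrow> nat \<Rightarrow> real" where
  "SN N a b = (\<Sum>(k1,k2)\<in>DD N. 1/(real k1^a * real k2^b))"
definition SSN :: "nat \<Rightarrow> nat \<Rightarrow> nat \<Rightarrow> real" where
  "SSN N a b = (\<Sum>(k1,k2)\<in>DS N. 1/(real k1^a * real k2^b))"
definition QN :: "nat \<Rightarrow> nat \<Rightarrow> nat \<Rightarrow> real" where
  "QN N a b = (\<Sum>(x,y)\<in>TT N. 1/(real x^a * real y^b))"
definition EN :: "nat \<Rightarrow> nat \<Rightarrow> nat \<Rightarrow> real" where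
  "EN N a b = (\<Sum>(x,y)\<in>RR N. 1/(real x^a * real y^b))"

lemma sq_fin: "finite {(x,y). P x y \<and> x < N \<and> (y::nat) < N}"
  by (rule finite_subset[of _ "{..<N} \<times> {..<N}"]) auto

lemma fin_DD: "finite (DD N)" unfolding DD_def by (rule finite_subset[OF _ sq_fin[of "\<lambda>_ _. True" N]]) auto
lemma fin_DS: "finite (DS N)" unfolding DS_def by (rule finite_subset[OF _ sq_fin[of "\<lambda>_ _. True" N]]) auto
lemma fin_TT: "finite (TT N)" unfolding TT_def by (rule finite_subset[OF _ sq_fin[of "\<lambda>_ _. True" N]]) auto
lemma fin_RR: "finite (RR N)" unfolding RR_def by (rule finite_subset[OF _ sq_fin[of "\<lambda>_ _. True" N]]) auto

lemma conv_DD: "(\<Sum>k2\<in>{1..<N}. \<Sum>k1\<in>{1..<k2}. g k1 k2) = (\<Sum>(k1,k2)\<in>DD N. g k1 k2)"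
proof -
  have "(\<Sum>(k1,k2)\<in>DD N. g k1 k2) = (\<Sum>(k2,k1)\<in>Sigma {1..<N} (\<lambda>k2. {1..<k2}). g k1 k2)"
    by (rule sum.reindex_bij_witness[of _ prod.swap prod.swap]) (auto simp: DD_def)
  then show ?thesis by (simp add: sum.Sigma)
qed

lemma TT_DD1: "(\<Sum>(x,y)\<in>TT N. g x (x+y)) = (\<Sum>(k1,k2)\<in>DD N. g k1 k2)"
  by (rule sum.reindex_bij_witness[of _ "\<lambda>(k1,k2). (k1,k2-k1)" "\<lambda>(x,y). (x,x+y)"]) (auto simp: DD_def TT_def)

lemma TT_DD2: "(\<Sum>(x,y)\<in>TT N. g y (x+y)) = (\<Sum>(k1,k2)\<in>DD N. g k1 k2)"
  by (rule sum.reindex_bij_witness[of _ "\<lambda>(k1,k2). (k2-k1,k1)" "\<lambda>(x,y). (y,x+y)"]) (auto simp: DD_def TT_def)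

lemma ZZ_sq: "ZN N a * ZN N b = (\<Sum>(x,y)\<in>{1..<N}\<times>{1..<N}. 1/(real x^a * real y^b))"
  unfolding ZN_def sum_product sum.cartesian_product by simp

lemma HP: "ZN N a * ZN N b = SN N a b + SSN N b a"
proof -
  let ?V = "{(x,y). 0<y \<and> y\<le>x \<and> x<N}"
  have fV: "finite ?V" by (rule finite_subset[OF _ sq_fin[of "\<lambda>_ _. True" N]]) auto
  have e: "{1..<N}\<times>{1..<N} = DD N \<union> ?V" by (auto simp: DD_def)
  have d: "DD N \<inter> ?V = {}" by (auto simp: DD_def)
  have "(\<Sum>(x,y)\<in>?V. 1/(real x^a * real y^b)) = SSN N b a"
    unfolding SSN_def
    by (rule sum.reindex_bij_witness[of _ prod.swap prod.swap]) (auto simp: DS_def)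
  then show ?thesis unfolding ZZ_sq e sum.union_disjoint[OF fin_DD fV d] SN_def by simp
qed

lemma SD: "SSN N a b = SN N a b + ZN N (a+b)"
proof -
  let ?G = "(\<lambda>k. (k,k)) ` {1..<N}"
  have e: "DS N = DD N \<union> ?G" by (auto simp: DS_def DD_def)
  have d: "DD N \<inter> ?G = {}" by (auto simp: DD_def)
  have "(\<Sum>(k1,k2)\<in>?G. 1/(real k1^a * real k2^b)) = ZN N (a+b)"
    unfolding ZN_def by (subst sum.reindex) (auto simp: inj_on_def power_add)
  then show ?thesis unfolding SSN_def e sum.union_disjoint[OF fin_DD finite_imageI[OF finite_atLeastLessThan] d] SN_def by simp
qed

lemma QE: "ZN N a * ZN N b = QN N a b + EN N a b"
proof -
  have e: "{1..<N}\<times>{1..<N} = TT N \<union> RR N" by (auto simp: TT_def RR_def)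
  have d: "TT N \<inter> RR N = {}" by (auto simp: TT_def RR_def)
  show ?thesis unfolding ZZ_sq e sum.union_disjoint[OF fin_TT fin_RR d] QN_def EN_def ..
qed

lemma FI:
  assumes "n \<ge> 1"
  shows "SN N m n = (\<Sum>i<m. (-1)^i * real ((n+i-1) choose i) * QN N (m-i) (n+i))
          + (-1)^m * (\<Sum>j<n. real ((m+j-1) choose j) * SN N (m+j) (n-j))"
proof -
  have "SN N m n = (\<Sum>(x,y)\<in>TT N. 1/(real x^m * real (x+y)^n))"
    unfolding SN_def using TT_DD1[of "\<lambda>k1 k2. 1/(real k1^m * real k2^n)" N] by simp
  also have "\<dots> = (\<Sum>(x,y)\<in>TT N. (\<Sum>i<m. (-1)^i * real ((n+i-1) choose i) * (1/(real x^(m-i)*real y^(n+i))))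
          + (-1)^m * (\<Sum>j<n. real ((m+j-1) choose j) * (1/(real y^(m+j)*real (x+y)^(n-j)))))"
  proof (rule sum.cong[OF refl])
    fix z assume "z \<in> TT N"
    then obtain x y where z: "z = (x,y)" "x > 0" "y > 0" by (auto simp: TT_def)
    show "(case z of (x,y) \<Rightarrow> 1/(real x^m * real (x+y)^n)) = (case z of (x,y) \<Rightarrow> (\<Sum>i<m. (-1)^i * real ((n+i-1) choose i) * (1/(real x^(m-i)*real y^(n+i))))
          + (-1)^m * (\<Sum>j<n. real ((m+j-1) choose j) * (1/(real y^(m+j)*real (x+y)^(n-j)))))"
      using pf[of "real x" "real y" n m] z assms by simp
  qed
  also have "\<dots> = (\<Sum>i<m. (-1)^i * real ((n+i-1) choose i) * QN N (m-i) (n+i))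
          + (-1)^m * (\<Sum>j<n. real ((m+j-1) choose j) * (\<Sum>(x,y)\<in>TT N. 1/(real y^(m+j)*real (x+y)^(n-j))))"
    unfolding QN_def sum.distrib sum_distrib_left case_prod_beta
    by (simp add: sum.swap[of _ "TT N"] sum_distrib_left)
  also have "(\<Sum>j<n. real ((m+j-1) choose j) * (\<Sum>(x,y)\<in>TT N. 1/(real y^(m+j)*real (x+y)^(n-j))))
     = (\<Sum>j<n. real ((m+j-1) choose j) * SN N (m+j) (n-j))"
    unfolding SN_def
  proof (rule sum.cong[OF refl])
    fix j
    show "real ((m+j-1) choose j) * (\<Sum>(x,y)\<in>TT N. 1/(real y^(m+j)*real (x+y)^(n-j))) =
      real ((m+j-1) choose j) * (\<Sum>(k1,k2)\<in>DD N. 1/(real k1^(m+j) * real k2^(n-j)))"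
      using TT_DD2[of "\<lambda>k1 k2. 1/(real k1^(m+j) * real k2^(n-j))" N] by simp
  qed
  finally show ?thesis .
qed

lemma tele_aux: assumes "k \<ge> 1"
  shows "(\<Sum>j\<in>{k<..<k+1+d}. 1/real j^2) \<le> 1/real k - 1/real (k+d)"
proof (induction d)
  case 0
  have "{k<..<k+1+0} = {}" by auto
  then show ?case by simp
next
  case (Suc d)
  have e: "{k<..<k+1+Suc d} = insert (k+1+d) {k<..<k+1+d}" by auto
  have "(\<Sum>j\<in>{k<..<k+1+Suc d}. 1/real j^2) = 1/real (k+1+d)^2 + (\<Sum>j\<in>{k<..<k+1+d}. 1/real j^2)"
    unfolding e by (subst sum.insert) auto
  also have "\<dots> \<le> 1/real (k+1+d)^2 + (1/real k - 1/real (k+d))" using Suc by simp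
  also have "1/real (k+1+d)^2 \<le> 1/real (k+d) - 1/real (k+Suc d)"
  proof -
    have p: "real (k+d) > 0" using assms by simp
    have "1/real (k+1+d)^2 \<le> 1/(real (k+d) * real (k+1+d))"
      using p by (intro divide_left_mono) (auto simp: power2_eq_square intro!: mult_mono)
    also have "\<dots> = 1/real (k+d) - 1/real (k+Suc d)" using p by (simp add: field_simps)
    finally show ?thesis .
  qed
  finally show ?case by simp
qed

lemma tele: assumes "k \<ge> 1" shows "(\<Sum>j\<in>{k<..<N}. 1/real j^2) \<le> 1/real k"
proof (cases "N \<le> k + 1")
  case True then have "{k<..<N} = {}" by auto
  then show ?thesis by simp
next
  case False
  then obtain d where "N = k+1+d" by (metis add.commute le_iff_add nat_le_linear)
  then have h: "(\<Sum>j\<in>{k<..<N}. 1/real j^2) \<le> 1/real k - 1/real (k+d)" using tele_aux[OF assms, of d] by simp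
  have "0 \<le> 1/real (k+d)" by simp
  with h show ?thesis by linarith
qed

lemma ZN_nonneg: "ZN N a \<ge> 0" unfolding ZN_def by (intro sum_nonneg) auto

lemma ZN_mono: assumes "a \<le> b" "a \<ge> 1" shows "ZN N b \<le> ZN N a"
  unfolding ZN_def
proof (rule sum_mono)
  fix k assume "k \<in> {1..<N}"
  then have "real k \<ge> 1" by simp
  then have "real k^a \<le> real k^b" using assms by (intro power_increasing) auto
  moreover have "real k^a > 0" "real k^b > 0" using \<open>real k \<ge> 1\<close> by simp_all
  ultimately show "1/real k^b \<le> 1/real k^a" by (intro divide_left_mono) auto
qed

lemma ZN2: "ZN N 2 \<le> 2"
proof -
  have "ZN N 2 \<le> (\<Sum>k\<in>insert 1 {1<..<N}. 1/real k^2)"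
    unfolding ZN_def by (intro sum_mono2) auto
  also have "\<dots> \<le> 1 + (\<Sum>k\<in>{1<..<N}. 1/real k^2)" by (subst sum.insert) auto
  also have "\<dots> \<le> 1 + 1" using tele[of 1 N] by simp
  finally show ?thesis by simp
qed

lemma ZN_b_le2: "b \<ge> 2 \<Longrightarrow> ZN N b \<le> 2"
  using ZN_mono[of 2 b N] ZN2[of N] by simp

lemma harm_ZN: "ZN N 1 = harm (N - 1)"
proof (cases N)
  case 0 then show ?thesis by (simp add: ZN_def harm_def)
next
  case (Suc M)
  then show ?thesis unfolding ZN_def harm_def
    by (intro sum.cong) (auto simp: field_simps)
qed

lemma ZN1_le: assumes "N \<ge> 1" shows "ZN N 1 \<le> 1 + ln (real N)"
proof (cases "N = 1")
  case True then show ?thesis by (simp add: ZN_def)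
next
  case False
  then have "N - 1 \<ge> 1" using assms by simp
  have "harm (N-1) - ln (real (N-1)) \<le> harm 1 - ln (real (1::nat))"
    using euler_mascheroni_sequence_decreasing[of 1 "N-1"] \<open>N - 1 \<ge> 1\<close> by simp
  moreover have "ln (real (N-1)) \<le> ln (real N)" using \<open>N-1 \<ge> 1\<close> by simp
  ultimately show ?thesis unfolding harm_ZN by (simp add: harm_def)
qed

lemma term_le: assumes "k1 \<ge> 1" "k2 \<ge> 1" "a \<ge> 1" "b \<ge> 2"
  shows "1/(real k1^a * real k2^b) \<le> 1/(real k1 * real k2^2)"
proof -
  have "real k1 \<le> real k1^a" using assms by (metis of_nat_1 of_nat_le_iff power_increasing power_one_right of_nat_power)
  moreover have "real k2^2 \<le> real k2^b" using assms by (intro power_increasing) auto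
  moreover have "real k1 * real k2^2 > 0" "real k1^a * real k2^b > 0" using assms by simp_all
  ultimately show ?thesis using assms by (intro divide_left_mono mult_mono mult_pos_pos) auto
qed

lemma SN_bound: assumes "a \<ge> 1" "b \<ge> 2" shows "SN N a b \<le> 2"
proof -
  have "SN N a b \<le> (\<Sum>(k1,k2)\<in>DD N. 1/(real k1 * real k2^2))"
    unfolding SN_def by (intro sum_mono) (auto simp: DD_def intro!: term_le assms)
  also have "\<dots> = (\<Sum>k1\<in>{1..<N}. \<Sum>k2\<in>{k1<..<N}. 1/(real k1 * real k2^2))"
  proof -
    have "DD N = Sigma {1..<N} (\<lambda>k1. {k1<..<N})" by (auto simp: DD_def)
    then show ?thesis by (simp add: sum.Sigma)
  qed
  also have "\<dots> \<le> (\<Sum>k1\<in>{1..<N}. 1/real k1^2)"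
  proof (rule sum_mono)
    fix k1 assume k1: "k1 \<in> {1..<N}"
    have "(\<Sum>k2\<in>{k1<..<N}. 1/(real k1 * real k2^2)) = (1/real k1) * (\<Sum>k2\<in>{k1<..<N}. 1/real k2^2)"
      by (simp add: sum_distrib_left)
    also have "\<dots> \<le> (1/real k1) * (1/real k1)" using k1 tele[of k1 N] by (intro mult_left_mono) auto
    finally show "(\<Sum>k2\<in>{k1<..<N}. 1/(real k1 * real k2^2)) \<le> 1/real k1^2" by (simp add: power2_eq_square)
  qed
  also have "\<dots> \<le> 2" using ZN2[of N] by (simp add: ZN_def)
  finally show ?thesis .
qed

lemma SSN_bound: assumes "a \<ge> 1" "b \<ge> 2" shows "SSN N a b \<le> 4"
  using SD[of N a b] SN_bound[OF assms, of N] ZN_b_le2[of "a+b" N] assms by simp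

lemma zeta_summable: assumes "b \<ge> 2" shows "summable (\<lambda>k. 1/real (k+1)^b)"
proof -
  have "summable (\<lambda>n. inverse (real (Suc n) ^ b))"
    using inverse_power_summable[OF assms, where 'a=real] by (subst summable_Suc_iff)
  then show ?thesis by (simp add: divide_inverse)
qed

lemma ZN_as: "ZN N b = (\<Sum>k<N-1. 1/real (k+1)^b)"
  unfolding ZN_def
  by (rule sum.reindex_bij_witness[of _ "\<lambda>k. k+1" "\<lambda>k. k-1"]) auto

lemma tail_aux: assumes "N \<ge> 2"
  shows "(\<Sum>n<K. 1/real (n+N)^2) \<le> 1/(real N - 1) - 1/(real N - 1 + real K)"
proof (induction K)
  case 0 then show ?case by simp
next
  case (Suc K)
  have p: "real N - 1 + real K > 0" using assms by simp
  have "1/real (K+N)^2 \<le> 1/((real N - 1 + real K) * (real N + real K))"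
    using p by (intro divide_left_mono) (auto simp: power2_eq_square intro!: mult_mono)
  also have "\<dots> = 1/(real N - 1 + real K) - 1/(real N - 1 + real (Suc K))" using p by (simp add: field_simps)
  finally show ?case using Suc by simp
qed

lemma tail_bound: assumes "b \<ge> 2" "N \<ge> 2"
  shows "0 \<le> zeta b - ZN N b" "zeta b - ZN N b \<le> 1/(real N - 1)"
proof -
  let ?f = "\<lambda>k. 1/real (k+1)^b"
  have s: "summable ?f" by (rule zeta_summable[OF assms(1)])
  have z: "zeta b = (\<Sum>n. ?f (n + (N-1))) + (\<Sum>i<N-1. ?f i)"
    unfolding zeta_def using suminf_split_initial_segment[OF s, of "N-1"] by simp
  have s2: "summable (\<lambda>n. ?f (n + (N-1)))" using summable_ignore_initial_segment[OF s] .
  have d: "zeta b - ZN N b = (\<Sum>n. ?f (n + (N-1)))" unfolding z ZN_as by simp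
  show "0 \<le> zeta b - ZN N b" unfolding d by (intro suminf_nonneg s2) auto
  have "(\<Sum>n. ?f (n + (N-1))) \<le> 1/(real N - 1)"
  proof (rule suminf_le_const[OF s2])
    fix K
    have "(\<Sum>n<K. ?f (n + (N-1))) \<le> (\<Sum>n<K. 1/real (n+N)^2)"
    proof (rule sum_mono)
      fix n
      have "real (n+N)^2 \<le> real (n+N)^b" using assms by (intro power_increasing) auto
      moreover have "real (n+N)^2 > 0" using assms by simp
      moreover have "n + (N-1) + 1 = n + N" using assms by simp
      ultimately show "?f (n + (N-1)) \<le> 1/real (n+N)^2"
        by (simp only:) (intro divide_left_mono, auto)
    qed
    also have "\<dots> \<le> 1/(real N - 1) - 1/(real N - 1 + real K)" by (rule tail_aux[OF assms(2)])
    also have "\<dots> \<le> 1/(real N - 1)" using assms by simp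
    finally show "(\<Sum>n<K. ?f (n + (N-1))) \<le> 1/(real N - 1)" .
  qed
  then show "zeta b - ZN N b \<le> 1/(real N - 1)" unfolding d .
qed

lemma ZN_lim: assumes "b \<ge> 2" shows "(\<lambda>N. ZN N b) \<longlonglongrightarrow> zeta b"
proof (rule LIM_zero_cancel, rule Lim_null_comparison)
  show "\<forall>\<^sub>F N in sequentially. norm (ZN N b - zeta b) \<le> 1/(real N - 1)"
    using eventually_ge_at_top[of 2] by eventually_elim (use tail_bound[OF assms] in auto)
  show "(\<lambda>N. 1/(real N - 1)) \<longlonglongrightarrow> 0" by real_asymp
qed

lemma L1: assumes "a \<ge> 1" "b \<ge> 2" shows "(\<lambda>N. ZN N a * (ZN N b - zeta b)) \<longlonglongrightarrow> 0"
proof (rule Lim_null_comparison)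
  show "\<forall>\<^sub>F N in sequentially. norm (ZN N a * (ZN N b - zeta b)) \<le> (1 + ln (real N)) * (1/(real N - 1))"
    using eventually_ge_at_top[of 2]
  proof eventually_elim
    case (elim N)
    have "norm (ZN N a * (ZN N b - zeta b)) = ZN N a * (zeta b - ZN N b)"
      using ZN_nonneg[of N a] tail_bound[OF assms(2) elim] by (simp add: abs_mult)
    also have "\<dots> \<le> (1 + ln (real N)) * (1/(real N - 1))"
      using ZN_mono[of 1 a N] ZN1_le[of N] tail_bound[OF assms(2) elim] ZN_nonneg[of N a] assms elim
      by (intro mult_mono) auto
    finally show ?case .
  qed
  show "(\<lambda>N. (1 + ln (real N)) * (1/(real N - 1))) \<longlonglongrightarrow> 0" by real_asymp
qed

lemma RR_y: fixes g :: "nat \<Rightarrow> real" shows "(\<Sum>(x,y)\<in>RR N. g y) = (\<Sum>y\<in>{1..<N}. real y * g y)"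
proof -
  have "(\<Sum>(x,y)\<in>RR N. g y) = (\<Sum>(y,x)\<in>Sigma {1..<N} (\<lambda>y. {N-y..<N}). g y)"
    by (rule sum.reindex_bij_witness[of _ prod.swap prod.swap]) (auto simp: RR_def)
  also have "\<dots> = (\<Sum>y\<in>{1..<N}. \<Sum>x\<in>{N-y..<N}. g y)" by (subst sum.Sigma) auto
  also have "\<dots> = (\<Sum>y\<in>{1..<N}. real y * g y)"
    by (intro sum.cong) auto
  finally show ?thesis .
qed

lemma EN_bound: assumes "a \<ge> 1" "b \<ge> 2" "N \<ge> 1"
  shows "EN N a b \<le> ((1 + ln (real N))^2 + (1 + ln (real N))) / real N"
proof -
  have "EN N a b \<le> (\<Sum>(x,y)\<in>RR N. (1/real N) * (1/(real x * real y) + 1/real y^2))"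
    unfolding EN_def
  proof (rule sum_mono)
    fix z assume "z \<in> RR N"
    then obtain x y where z: "z = (x,y)" "x \<ge> 1" "y \<ge> 1" "N \<le> x + y" by (auto simp: RR_def)
    have "1/(real x^a * real y^b) \<le> 1/(real x * real y^2)" using term_le z assms by simp
    also have "\<dots> = (1/(real x + real y)) * (1/(real x * real y) + 1/real y^2)"
      using z by (simp add: field_simps power2_eq_square)
    also have "\<dots> \<le> (1/real N) * (1/(real x * real y) + 1/real y^2)"
      using z assms by (intro mult_right_mono divide_left_mono) auto
    finally show "(case z of (x,y) \<Rightarrow> 1/(real x^a * real y^b)) \<le> (case z of (x,y) \<Rightarrow> (1/real N) * (1/(real x * real y) + 1/real y^2))"
      using z by simp
  qed
  also have "\<dots> = (1/real N) * ((\<Sum>(x,y)\<in>RR N. 1/(real x * real y)) + (\<Sum>(x,y)\<in>RR N. 1/real y^2))"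
    unfolding case_prod_beta distrib_left sum.distrib sum_distrib_left ..
  finally have A: "EN N a b \<le> (1/real N) * ((\<Sum>(x,y)\<in>RR N. 1/(real x * real y)) + (\<Sum>(x,y)\<in>RR N. 1/real y^2))" .
  have B: "(\<Sum>(x,y)\<in>RR N. 1/(real x * real y)) \<le> (1 + ln (real N))^2"
  proof -
    have "(\<Sum>(x,y)\<in>RR N. 1/(real x * real y)) \<le> (\<Sum>(x,y)\<in>{1..<N}\<times>{1..<N}. 1/(real x * real y))"
      by (intro sum_mono2) (auto simp: RR_def)
    also have "\<dots> = ZN N 1 * ZN N 1" using ZZ_sq[of N 1 1] by simp
    also have "\<dots> \<le> (1 + ln (real N))^2"
      using ZN1_le[OF assms(3)] ZN_nonneg[of N 1] by (simp add: power2_eq_square mult_mono)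
    finally show ?thesis .
  qed
  have C: "(\<Sum>(x,y)\<in>RR N. 1/real y^2) \<le> 1 + ln (real N)"
  proof -
    have "(\<Sum>(x,y)\<in>RR N. 1/real y^2) = ZN N 1"
      unfolding RR_y[of "\<lambda>y. 1/real y^2" N] ZN_def by (intro sum.cong) (auto simp: power2_eq_square)
    then show ?thesis using ZN1_le[OF assms(3)] by simp
  qed
  have "(1/real N) * ((\<Sum>(x,y)\<in>RR N. 1/(real x * real y)) + (\<Sum>(x,y)\<in>RR N. 1/real y^2))
     \<le> (1/real N) * ((1 + ln (real N))^2 + (1 + ln (real N)))"
    using B C by (intro mult_left_mono) auto
  with A show ?thesis by simp
qed

lemma EN_nonneg: "EN N a b \<ge> 0" unfolding EN_def by (intro sum_nonneg) auto

lemma EN_lim: assumes "a \<ge> 1" "b \<ge> 2" shows "(\<lambda>N. EN N a b) \<longlonglongrightarrow> 0"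
proof (rule Lim_null_comparison)
  show "\<forall>\<^sub>F N in sequentially. norm (EN N a b) \<le> ((1 + ln (real N))^2 + (1 + ln (real N))) / real N"
    using eventually_ge_at_top[of 1] by eventually_elim (use EN_bound[OF assms] EN_nonneg in auto)
  show "(\<lambda>N. ((1 + ln (real N))^2 + (1 + ln (real N))) / real N) \<longlonglongrightarrow> 0" by real_asymp
qed

lemma harm_lim: "(\<lambda>N. ZN N 1 - (ln (real N) + euler_mascheroni)) \<longlonglongrightarrow> 0"
proof -
  have "(\<lambda>N. (harm N - ln (real N) - euler_mascheroni) - 1/real N) \<longlonglongrightarrow> (euler_mascheroni - euler_mascheroni) - 0"
    by (intro tendsto_intros euler_mascheroni_LIMSEQ)
  moreover have "\<forall>\<^sub>F N in sequentially. (harm N - ln (real N) - euler_mascheroni) - 1/real N = ZN N 1 - (ln (real N) + euler_mascheroni)"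
    using eventually_ge_at_top[of 1]
  proof eventually_elim
    case (elim N)
    then have "harm N = harm (N-1) + inverse (real N)" using harm_Suc[of "N-1"] by simp
    then show ?case unfolding harm_ZN by (simp add: divide_inverse)
  qed
  ultimately show ?thesis by (simp add: tendsto_cong)
qed

lemma lim_infsum:
  fixes f :: "nat \<times> nat \<Rightarrow> real" and D :: "nat \<Rightarrow> (nat \<times> nat) set"
  assumes nonneg: "\<And>z. z\<in>A \<Longrightarrow> f z \<ge> 0" and sub: "\<And>N. D N \<subseteq> A"
    and fin: "\<And>N. finite (D N)" and mono: "\<And>N M. N \<le> M \<Longrightarrow> D N \<subseteq> D M"
    and exh: "\<And>z. z \<in> A \<Longrightarrow> \<exists>N. z \<in> D N" and bnd: "\<And>N. sum f (D N) \<le> B"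
  shows "(\<lambda>N. sum f (D N)) \<longlonglongrightarrow> infsum f A"
proof -
  have cover: "\<exists>N. F \<subseteq> D N" if "finite F" "F \<subseteq> A" for F
    using that
  proof (induction F rule: finite_induct)
    case empty then show ?case by simp
  next
    case (insert z F)
    have "F \<subseteq> A" "z \<in> A" using insert.prems by auto
    obtain N1 where "F \<subseteq> D N1" using insert.IH \<open>F \<subseteq> A\<close> by blast
    moreover obtain N2 where "z \<in> D N2" using exh[OF \<open>z \<in> A\<close>] by blast
    ultimately have "insert z F \<subseteq> D (max N1 N2)" using mono[of N1 "max N1 N2"] mono[of N2 "max N1 N2"] by auto
    then show ?case by blast
  qed
  have summ: "f summable_on A"
  proof (rule nonneg_bdd_above_summable_on[OF nonneg])
    show "bdd_above (sum f ` {F. F \<subseteq> A \<and> finite F})"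
    proof (rule bdd_aboveI2)
      fix F assume "F \<in> {F. F \<subseteq> A \<and> finite F}"
      then have F: "F \<subseteq> A" "finite F" by auto
      obtain N where "F \<subseteq> D N" using cover[OF F(2) F(1)] by blast
      have "sum f F \<le> sum f (D N)"
      proof (rule sum_mono2[OF fin \<open>F \<subseteq> D N\<close>])
        fix x assume "x \<in> D N - F"
        then have "x \<in> A" using sub[of N] by blast
        then show "0 \<le> f x" by (rule nonneg)
      qed
      then show "sum f F \<le> B" using bnd[of N] by linarith
    qed
  qed
  have hs: "(sum f \<longlongrightarrow> infsum f A) (finite_subsets_at_top A)"
    using has_sum_infsum[OF summ] unfolding has_sum_def .
  have fl: "filterlim D (finite_subsets_at_top A) sequentially"
    unfolding filterlim_def le_filter_def eventually_filtermap
  proof (intro allI impI)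
    fix P assume "eventually P (finite_subsets_at_top A)"
    then have "\<exists>X. finite X \<and> X \<subseteq> A \<and> (\<forall>Y. finite Y \<and> X \<subseteq> Y \<and> Y \<subseteq> A \<longrightarrow> P Y)"
      by (simp only: eventually_finite_subsets_at_top)
    then obtain X where X1: "finite X" and X2: "X \<subseteq> A" and X3: "\<forall>Y. finite Y \<and> X \<subseteq> Y \<and> Y \<subseteq> A \<longrightarrow> P Y"
      by (elim exE conjE)
    obtain N0 where N0: "X \<subseteq> D N0" using cover[OF X1 X2] by (elim exE)
    show "eventually (\<lambda>N. P (D N)) sequentially"
      unfolding eventually_sequentially
    proof (rule exI[of _ N0], intro allI impI)
      fix N assume "N0 \<le> N"
      then have "X \<subseteq> D N" using mono[of N0 N] N0 by (meson order_trans)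
      then show "P (D N)" using X3 fin[of N] sub[of N] by simp
    qed
  qed
  show ?thesis using filterlim_compose[OF hs fl] .
qed

lemma SN_lim: assumes "a \<ge> 1" "b \<ge> 2" shows "(\<lambda>N. SN N a b) \<longlonglongrightarrow> mzv2 a b"
  unfolding SN_def mzv2_def
proof (rule lim_infsum[where B=2])
  fix N show "(\<Sum>(k1,k2)\<in>DD N. 1/(real k1^a * real k2^b)) \<le> 2" using SN_bound[OF assms] unfolding SN_def .
next
  fix z :: "nat \<times> nat" assume "z \<in> {(k1, k2). 0 < k1 \<and> k1 < k2}"
  then show "\<exists>N. z \<in> DD N" by (intro exI[of _ "snd z + 1"]) (auto simp: DD_def)
qed (auto simp: DD_def fin_DD[unfolded DD_def])

lemma SSN_lim: assumes "a \<ge> 1" "b \<ge> 2" shows "(\<lambda>N. SSN N a b) \<longlonglongrightarrow> mzv2_star a b"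
  unfolding SSN_def mzv2_star_def
proof (rule lim_infsum[where B=4])
  fix N show "(\<Sum>(k1,k2)\<in>DS N. 1/(real k1^a * real k2^b)) \<le> 4" using SSN_bound[OF assms] unfolding SSN_def .
next
  fix z :: "nat \<times> nat" assume "z \<in> {(k1, k2). 0 < k1 \<and> k1 \<le> k2}"
  then show "\<exists>N. z \<in> DS N" by (intro exI[of _ "snd z + 1"]) (auto simp: DS_def)
qed (auto simp: DS_def fin_DS[unfolded DS_def])

lemma poly_zero_lim:
  fixes p :: "real poly"
  assumes g: "filterlim g at_top F" and F: "F \<noteq> bot" and t: "((\<lambda>x. poly p (g x)) \<longlongrightarrow> 0) F"
  shows "p = 0"
proof (rule ccontr)
  assume "p \<noteq> 0"
  show False
  proof (cases "degree p = 0")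
    case True
    then obtain c where c: "p = [:c:]" by (rule degree_eq_zeroE)
    then have "((\<lambda>x. c) \<longlongrightarrow> 0) F" using t by simp
    then have "c = 0" using tendsto_const_iff[OF F] by blast
    then show False using c \<open>p \<noteq> 0\<close> by simp
  next
    case False
    have "filterlim (poly p) at_infinity at_infinity" using False by (intro filterlim_poly_at_infinity) auto
    then have "filterlim (\<lambda>x. poly p (g x)) at_infinity F"
      using filterlim_compose filterlim_at_top_imp_at_infinity[OF g] by blast
    then show False using not_tendsto_and_filterlim_at_infinity[OF F t] by blast
  qed
qed

lemma THE_poly:
  fixes p :: "real poly"
  assumes g: "filterlim g at_top F" and F: "F \<noteq> bot" and d: "degree p \<le> d"
    and t: "((\<lambda>x. h x - poly p (g x)) \<longlongrightarrow> 0) F"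
  shows "(THE p. degree p \<le> d \<and> ((\<lambda>x. h x - poly p (g x)) \<longlongrightarrow> 0) F) = p"
proof (rule the1_equality)
  show "\<exists>!p. degree p \<le> d \<and> ((\<lambda>x. h x - poly p (g x)) \<longlongrightarrow> 0) F"
  proof (rule ex_ex1I)
    show "\<exists>p. degree p \<le> d \<and> ((\<lambda>x. h x - poly p (g x)) \<longlongrightarrow> 0) F" using d t by blast
  next
    fix p q assume p: "degree p \<le> d \<and> ((\<lambda>x. h x - poly p (g x)) \<longlongrightarrow> 0) F"
      and q: "degree q \<le> d \<and> ((\<lambda>x. h x - poly q (g x)) \<longlongrightarrow> 0) F"
    have "((\<lambda>x. (h x - poly q (g x)) - (h x - poly p (g x))) \<longlongrightarrow> 0 - 0) F"
      using p q by (intro tendsto_diff) auto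
    then have "((\<lambda>x. poly (p - q) (g x)) \<longlongrightarrow> 0) F" by simp
    then have "p - q = 0" by (rule poly_zero_lim[OF g F])
    then show "p = q" by simp
  qed
  show "degree p \<le> d \<and> ((\<lambda>x. h x - poly p (g x)) \<longlongrightarrow> 0) F" using d t by blast
qed

lemma neg_ln_at_top: "filterlim (\<lambda>x. - ln x) at_top (at_right (0::real))"
  using ln_at_0 filterlim_uminus_at_top by (simp add: filterlim_uminus_at_bot)

lemma zsh_ge2: assumes "m \<ge> 2" shows "zeta_sh m = [:zeta m:]"
proof -
  let ?h = "\<lambda>\<epsilon>::real. \<Sum>k. (1 - \<epsilon>) ^ (k + 1) / real (k + 1) ^ m"
  have ul: "uniform_limit {0..1} (\<lambda>n \<epsilon>. \<Sum>k<n. (1 - \<epsilon>) ^ (k + 1) / real (k + 1) ^ m) ?h sequentially"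
  proof (rule Weierstrass_m_test)
    fix k and \<epsilon> :: real assume "\<epsilon> \<in> {0..1}"
    then have "\<bar>1 - \<epsilon>\<bar> ^ (k+1) \<le> 1" by (intro power_le_one) auto
    then show "norm ((1 - \<epsilon>) ^ (k + 1) / real (k + 1) ^ m) \<le> 1/real (k+1)^m"
      by (simp add: abs_mult power_abs divide_right_mono)
  next
    show "summable (\<lambda>k. 1/real (k+1)^m)" by (rule zeta_summable[OF assms])
  qed
  have "continuous_on {0..1} ?h"
    by (rule uniform_limit_theorem[OF _ ul]) (auto intro!: always_eventually allI continuous_intros)
  then have "(?h \<longlongrightarrow> ?h 0) (at_right 0)" by (rule continuous_on_Icc_at_rightD) simp
  then have "((\<lambda>\<epsilon>. ?h \<epsilon> - poly [:zeta m:] (- ln \<epsilon>)) \<longlongrightarrow> 0) (at_right 0)"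
    by (simp add: zeta_def LIM_zero)
  then show ?thesis unfolding zeta_sh_def
    by (intro THE_poly[OF neg_ln_at_top trivial_limit_at_right_real]) auto
qed

lemma zsh_1: "zeta_sh 1 = [:0,1:]"
proof -
  have e: "(\<Sum>k. (1 - \<epsilon>) ^ (k + 1) / real (k + 1) ^ 1) = - ln \<epsilon>" if "0 < \<epsilon>" "\<epsilon> < 1" for \<epsilon> :: real
  proof -
    let ?f = "\<lambda>k. (1 - \<epsilon>) ^ (k + 1) / real (k + 1)"
    have s: "summable ?f"
    proof (rule summable_comparison_test'[of "\<lambda>k. (1 - \<epsilon>)^k" 0])
      show "summable (\<lambda>k. (1 - \<epsilon>)^k)" using that by (intro summable_geometric) auto
      fix k :: nat
      have "(1 - \<epsilon>) ^ (k + 1) \<le> (1 - \<epsilon>)^k" using that by (intro power_decreasing) auto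
      moreover have "(1 - \<epsilon>) ^ (k + 1) / real (k + 1) \<le> (1 - \<epsilon>) ^ (k + 1)"
        using frac_le[of "(1-\<epsilon>)^(k+1)" "(1-\<epsilon>)^(k+1)" 1 "real (k+1)"] that by simp
      moreover have nn: "0 \<le> ?f k" using that by simp
      ultimately show "norm (?f k) \<le> (1 - \<epsilon>)^k" by (simp only: real_norm_def abs_of_nonneg[OF nn])
    qed
    have "ln \<epsilon> = (\<Sum>n. (-1)^n * (1 / real (n + 1)) * (\<epsilon> - 1)^(Suc n))" using ln_series[of \<epsilon>] that by simp
    also have "\<dots> = (\<Sum>n. - ?f n)"
    proof (rule arg_cong[where f=suminf], rule ext)
      fix n
      have "(\<epsilon> - 1)^(Suc n) = ((-1) * (1 - \<epsilon>))^(Suc n)" by simp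
      also have "\<dots> = (-1)^(Suc n) * (1 - \<epsilon>)^(Suc n)" by (rule power_mult_distrib)
      finally have h: "(\<epsilon> - 1)^(Suc n) = - ((-1)^n * (1 - \<epsilon>)^(Suc n))" by simp
      show "(-1)^n * (1 / real (n + 1)) * (\<epsilon> - 1)^(Suc n) = - ?f n" unfolding h
        by (simp add: field_simps)
    qed
    also have "\<dots> = - suminf ?f" using suminf_minus[OF s] .
    finally show ?thesis by simp
  qed
  have "((\<lambda>\<epsilon>::real. (\<Sum>k. (1 - \<epsilon>) ^ (k + 1) / real (k + 1) ^ 1) - poly [:0,1:] (- ln \<epsilon>)) \<longlongrightarrow> 0) (at_right 0)"
  proof (rule tendsto_eventually)
    have "\<forall>\<^sub>F \<epsilon> in at_right (0::real). \<epsilon> < 1" using eventually_at_right_real[of 0 1] by (rule eventually_mono) auto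
    moreover have "\<forall>\<^sub>F \<epsilon> in at_right (0::real). 0 < \<epsilon>" by (simp add: eventually_at_right_less)
    ultimately show "\<forall>\<^sub>F \<epsilon> in at_right (0::real). (\<Sum>k. (1 - \<epsilon>) ^ (k + 1) / real (k + 1) ^ 1) - poly [:0,1:] (- ln \<epsilon>) = 0"
      by eventually_elim (use e in simp)
  qed
  then show ?thesis unfolding zeta_sh_def
    by (intro THE_poly[OF neg_ln_at_top trivial_limit_at_right_real]) auto
qed

abbreviation LL :: "nat \<Rightarrow> real" where "LL N \<equiv> ln (real N) + euler_mascheroni"

lemma LL_at_top: "filterlim LL at_top sequentially" by real_asymp

lemma nested_SN: "(\<lambda>N. (\<Sum>k2\<in>{1..<N}. \<Sum>k1\<in>{1..<k2}. 1 / (real k1 ^ a * real k2 ^ b))) = (\<lambda>N. SN N a b)"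
  unfolding SN_def conv_DD by simp

lemma ST: assumes "a \<ge> 1" "b \<ge> 1" "b = 1 \<longrightarrow> a \<ge> 2"
  shows "(\<lambda>N. SN N a b - poly (zeta_st a b) (LL N)) \<longlonglongrightarrow> 0"
proof -
  obtain p :: "real poly" where dp: "degree p \<le> 2" and tp: "(\<lambda>N. SN N a b - poly p (LL N)) \<longlonglongrightarrow> 0"
  proof (cases "b \<ge> 2")
    case True
    show ?thesis
    proof (rule that[of "[:mzv2 a b:]"])
      show "(\<lambda>N. SN N a b - poly [:mzv2 a b:] (LL N)) \<longlonglongrightarrow> 0"
        using SN_lim[OF assms(1) True] by (simp add: LIM_zero)
    qed simp
  next
    case False
    then have b1: "b = 1" and a2: "a \<ge> 2" using assms by auto
    show ?thesis
    proof (rule that[of "[:- mzv2_star 1 a, zeta a:]"])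
      show "degree [:- mzv2_star 1 a, zeta a:] \<le> 2"
        by (rule order_trans[OF degree_pCons_le]) simp
      have e: "SN N a b - poly [:- mzv2_star 1 a, zeta a:] (LL N) =
          ZN N 1 * (ZN N a - zeta a) + zeta a * (ZN N 1 - LL N) - (SSN N 1 a - mzv2_star 1 a)" for N
        using HP[of N a 1] b1 by (simp add: algebra_simps)
      have "(\<lambda>N. ZN N 1 * (ZN N a - zeta a) + zeta a * (ZN N 1 - LL N) - (SSN N 1 a - mzv2_star 1 a)) \<longlonglongrightarrow> 0 + zeta a * 0 - 0"
        using L1[of 1 a] a2 harm_lim SSN_lim[of 1 a] by (intro tendsto_intros) (auto simp: LIM_zero)
      then show "(\<lambda>N. SN N a b - poly [:- mzv2_star 1 a, zeta a:] (LL N)) \<longlonglongrightarrow> 0" unfolding e by simp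
    qed
  qed
  have "zeta_st a b = p"
    unfolding zeta_st_def
    using THE_poly[OF LL_at_top trivial_limit_sequentially dp tp[unfolded SN_def conv_DD[symmetric]]] by simp
  then show ?thesis using tp by simp
qed

lemma BI: assumes "a \<ge> 1" "b \<ge> 2"
  shows "(\<lambda>N. QN N a b - (poly (zeta_st b a) (LL N) + mzv2 a b + zeta (a+b))) \<longlonglongrightarrow> 0"
proof -
  have e: "QN N a b - (poly (zeta_st b a) (LL N) + mzv2 a b + zeta (a+b)) =
     (SN N a b - mzv2 a b) + (SN N b a - poly (zeta_st b a) (LL N)) + (ZN N (b+a) - zeta (a+b)) - EN N a b" for N
    using QE[of N a b] HP[of N a b] SD[of N b a] by (simp add: algebra_simps)
  have "(\<lambda>N. (SN N a b - mzv2 a b) + (SN N b a - poly (zeta_st b a) (LL N)) + (ZN N (b+a) - zeta (a+b)) - EN N a b) \<longlonglongrightarrow> 0 + 0 + 0 - 0"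
    using SN_lim[OF assms] ST[of b a] ZN_lim[of "b+a"] EN_lim[OF assms] assms
    by (intro tendsto_intros) (auto simp: LIM_zero add.commute)
  then show ?thesis unfolding e by simp
qed

lemma LZ: assumes "a \<ge> 1" "b \<ge> 2"
  shows "(\<lambda>N. ZN N a * ZN N b - zeta b * poly (zeta_sh a) (ZN N 1)) \<longlonglongrightarrow> 0"
proof -
  have e: "ZN N a * ZN N b - zeta b * poly (zeta_sh a) (ZN N 1) = ZN N a * (ZN N b - zeta b) + zeta b * (ZN N a - poly (zeta_sh a) (ZN N 1))" for N
    by (simp add: algebra_simps)
  have l2: "(\<lambda>N. ZN N a - poly (zeta_sh a) (ZN N 1)) \<longlonglongrightarrow> 0"
  proof (cases "a = 1")
    case True
    have "zeta_sh (Suc 0) = [:0,1:]" using zsh_1 by simp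
    then show ?thesis using True by simp
  next
    case False then show ?thesis using assms zsh_ge2[of a] ZN_lim[of a] by (simp add: LIM_zero)
  qed
  have "(\<lambda>N. ZN N a * (ZN N b - zeta b) + zeta b * (ZN N a - poly (zeta_sh a) (ZN N 1))) \<longlonglongrightarrow> 0 + zeta b * 0"
    using L1[OF assms] l2 by (intro tendsto_intros)
  then show ?thesis unfolding e by simp
qed

lemma BI': assumes "a \<ge> 1" "b \<ge> 2"
  shows "(\<lambda>N. QN N a b - zeta b * poly (zeta_sh a) (ZN N 1)) \<longlonglongrightarrow> 0"
proof -
  have e: "QN N a b - zeta b * poly (zeta_sh a) (ZN N 1) = (ZN N a * ZN N b - zeta b * poly (zeta_sh a) (ZN N 1)) - EN N a b" for N
    using QE[of N a b] by simp
  have "(\<lambda>N. (ZN N a * ZN N b - zeta b * poly (zeta_sh a) (ZN N 1)) - EN N a b) \<longlonglongrightarrow> 0 - 0"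
    using LZ[OF assms] EN_lim[OF assms] by (intro tendsto_intros)
  then show ?thesis unfolding e by simp
qed

lemma BJ': assumes "a \<ge> 2" "b \<ge> 1"
  shows "(\<lambda>N. SN N a b - (zeta a * poly (zeta_sh b) (ZN N 1) - mzv2_star b a)) \<longlonglongrightarrow> 0"
proof -
  have e: "SN N a b - (zeta a * poly (zeta_sh b) (ZN N 1) - mzv2_star b a) =
     (ZN N b * ZN N a - zeta a * poly (zeta_sh b) (ZN N 1)) - (SSN N b a - mzv2_star b a)" for N
    using HP[of N a b] by (simp add: algebra_simps)
  have "(\<lambda>N. (ZN N b * ZN N a - zeta a * poly (zeta_sh b) (ZN N 1)) - (SSN N b a - mzv2_star b a)) \<longlonglongrightarrow> 0 - 0"
    using LZ[of b a] SSN_lim[of b a] assms by (intro tendsto_intros) (auto simp: LIM_zero)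
  then show ?thesis unfolding e by simp
qed

lemma H_at_top: "filterlim (\<lambda>N. ZN N 1) at_top sequentially"
proof (rule filterlim_at_top_mono)
  show "filterlim (\<lambda>N::nat. ln (real N)) at_top sequentially" by real_asymp
  show "\<forall>\<^sub>F N in sequentially. ln (real N) \<le> ZN N 1"
    using eventually_ge_at_top[of 1]
  proof eventually_elim
    case (elim N)
    then show ?case using ln_le_harm[of "N-1"] unfolding harm_ZN by simp
  qed
qed

lemma part2:
  fixes m n :: nat
  assumes "m > 1" and "n > 1"
  shows "[:mzv2 m n:] =
           (\<Sum>i<m. (-1) ^ i * of_nat ((n + i - 1) choose i) *
              (zeta_st (n + i) (m - i) + [:mzv2 (m - i) (n + i):] + [:zeta (m + n):]))
           + (-1) ^ m * (\<Sum>j<n. of_nat ((m + j - 1) choose j) * zeta_st (m + j) (n - j))"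
    (is "_ = ?R")
proof -
  define A where "A N i = (-1)^i * real ((n + i - 1) choose i) * QN N (m-i) (n+i)" for N i
  define A' where "A' N i = (-1)^i * real ((n + i - 1) choose i) * (poly (zeta_st (n + i) (m - i)) (LL N) + mzv2 (m - i) (n + i) + zeta (m + n))" for N i
  define B where "B N j = real ((m + j - 1) choose j) * SN N (m+j) (n-j)" for N j
  define B' where "B' N j = real ((m + j - 1) choose j) * poly (zeta_st (m + j) (n - j)) (LL N)" for N j
  have pe: "poly ?R (LL N) = (\<Sum>i<m. A' N i) + (-1)^m * (\<Sum>j<n. B' N j)" for N
    unfolding A'_def B'_def by (simp add: poly_sum)
  have fi: "SN N m n = (\<Sum>i<m. A N i) + (-1)^m * (\<Sum>j<n. B N j)" for N
    unfolding A_def B_def using FI[of n N m] assms by simp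
  have d: "SN N m n - poly ?R (LL N) = (\<Sum>i<m. A N i - A' N i) + (-1)^m * (\<Sum>j<n. B N j - B' N j)" for N
    unfolding fi pe sum_subtractf by (simp add: algebra_simps)
  have l: "(\<lambda>N. SN N m n - poly ?R (LL N)) \<longlonglongrightarrow> 0"
    unfolding d
  proof (intro tendsto_add_zero tendsto_mult_right_zero tendsto_null_sum)
    fix i assume i: "i \<in> {..<m}"
    have e: "A N i - A' N i = (-1)^i * real ((n + i - 1) choose i) *
        (QN N (m-i) (n+i) - (poly (zeta_st (n + i) (m - i)) (LL N) + mzv2 (m - i) (n + i) + zeta ((m-i) + (n+i))))" for N
      unfolding A_def A'_def using i by (simp add: algebra_simps)
    show "(\<lambda>N. A N i - A' N i) \<longlonglongrightarrow> 0" unfolding e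
      using i assms by (intro tendsto_mult_right_zero BI) auto
  next
    fix j assume j: "j \<in> {..<n}"
    have e: "B N j - B' N j = real ((m + j - 1) choose j) * (SN N (m+j) (n-j) - poly (zeta_st (m + j) (n - j)) (LL N))" for N
      unfolding B_def B'_def by (simp add: algebra_simps)
    show "(\<lambda>N. B N j - B' N j) \<longlonglongrightarrow> 0" unfolding e
      using j assms by (intro tendsto_mult_right_zero ST) auto
  qed
  have "(\<lambda>N. poly (?R - [:mzv2 m n:]) (LL N)) \<longlonglongrightarrow> 0"
  proof -
    have "(\<lambda>N. (SN N m n - mzv2 m n) - (SN N m n - poly ?R (LL N))) \<longlonglongrightarrow> 0 - 0"
      using SN_lim[of m n] assms l by (intro tendsto_diff) (auto simp: LIM_zero)
    then show ?thesis by simp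
  qed
  then have "?R - [:mzv2 m n:] = 0" by (rule poly_zero_lim[OF LL_at_top trivial_limit_sequentially])
  then show ?thesis by simp
qed

lemma part1:
  fixes m n :: nat
  assumes "m > 1" and "n > 1"
  shows "P_poly m n = [:mzv2 m n:]"
proof -
  let ?H = "\<lambda>N. ZN N 1"
  define A where "A N i = (-1)^i * real ((n + i - 1) choose i) * QN N (m-i) (n+i)" for N i
  define A' where "A' N i = (-1)^i * real ((n + i - 1) choose i) * (zeta (n+i) * poly (zeta_sh (m - i)) (?H N))" for N i
  define B where "B N j = real ((m + j - 1) choose j) * SN N (m+j) (n-j)" for N j
  define B' where "B' N j = real ((m + j - 1) choose j) * (zeta (m+j) * poly (zeta_sh (n - j)) (?H N) - mzv2_star (n-j) (m+j))" for N j
  have pe: "poly (P_poly m n) (?H N) = (\<Sum>i<m. A' N i) + (-1)^m * (\<Sum>j<n. B' N j)" for N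
    unfolding A'_def B'_def P_poly_def by (simp add: poly_sum mult_ac)
  have fi: "SN N m n = (\<Sum>i<m. A N i) + (-1)^m * (\<Sum>j<n. B N j)" for N
    unfolding A_def B_def using FI[of n N m] assms by simp
  have d: "SN N m n - poly (P_poly m n) (?H N) = (\<Sum>i<m. A N i - A' N i) + (-1)^m * (\<Sum>j<n. B N j - B' N j)" for N
    unfolding fi pe sum_subtractf by (simp add: algebra_simps)
  have l: "(\<lambda>N. SN N m n - poly (P_poly m n) (?H N)) \<longlonglongrightarrow> 0"
    unfolding d
  proof (intro tendsto_add_zero tendsto_mult_right_zero tendsto_null_sum)
    fix i assume i: "i \<in> {..<m}"
    have e: "A N i - A' N i = (-1)^i * real ((n + i - 1) choose i) *
        (QN N (m-i) (n+i) - zeta (n+i) * poly (zeta_sh (m - i)) (?H N))" for N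
      unfolding A_def A'_def by (simp add: algebra_simps)
    show "(\<lambda>N. A N i - A' N i) \<longlonglongrightarrow> 0" unfolding e
      using i assms by (intro tendsto_mult_right_zero BI') auto
  next
    fix j assume j: "j \<in> {..<n}"
    have e: "B N j - B' N j = real ((m + j - 1) choose j) * (SN N (m+j) (n-j) - (zeta (m+j) * poly (zeta_sh (n - j)) (?H N) - mzv2_star (n-j) (m+j)))" for N
      unfolding B_def B'_def by (simp add: algebra_simps)
    show "(\<lambda>N. B N j - B' N j) \<longlonglongrightarrow> 0" unfolding e
      using j assms by (intro tendsto_mult_right_zero BJ') auto
  qed
  have "(\<lambda>N. poly (P_poly m n - [:mzv2 m n:]) (?H N)) \<longlonglongrightarrow> 0"
  proof -
    have "(\<lambda>N. (SN N m n - mzv2 m n) - (SN N m n - poly (P_poly m n) (?H N))) \<longlonglongrightarrow> 0 - 0"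
      using SN_lim[of m n] assms l by (intro tendsto_diff) (auto simp: LIM_zero)
    then show ?thesis by simp
  qed
  then have "P_poly m n - [:mzv2 m n:] = 0" by (rule poly_zero_lim[OF H_at_top trivial_limit_sequentially])
  then show ?thesis by simp
qed

lemma zeta_prod: assumes "m \<ge> 2" "n \<ge> 2" shows "zeta m * zeta n - zeta (m + n) = mzv2 m n + mzv2 n m"
proof -
  have e: "ZN N m * ZN N n - ZN N (m+n) = SN N m n + SN N n m" for N
    using HP[of N m n] SD[of N n m] by (simp add: add.commute)
  have "(\<lambda>N. ZN N m * ZN N n - ZN N (m+n)) \<longlonglongrightarrow> zeta m * zeta n - zeta (m + n)"
    using assms by (intro tendsto_intros ZN_lim) auto
  moreover have "(\<lambda>N. ZN N m * ZN N n - ZN N (m+n)) \<longlonglongrightarrow> mzv2 m n + mzv2 n m"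
    unfolding e using assms by (intro tendsto_intros SN_lim) auto
  ultimately show ?thesis by (rule LIMSEQ_unique)
qed

theorem theorem2p4:
  fixes m n :: nat
  assumes "m > 1" and "n > 1"
  shows "[:zeta m * zeta n - zeta (m + n):] = P_poly m n + P_poly n m
    \<and> [:mzv2 m n:] =
           (\<Sum>i<m. (-1) ^ i * of_nat ((n + i - 1) choose i) *
              (zeta_st (n + i) (m - i) + [:mzv2 (m - i) (n + i):] + [:zeta (m + n):]))
           + (-1) ^ m * (\<Sum>j<n. of_nat ((m + j - 1) choose j) * zeta_st (m + j) (n - j))"
proof
  show "[:zeta m * zeta n - zeta (m + n):] = P_poly m n + P_poly n m"
    using part1[OF assms] part1[OF assms(2,1)] zeta_prod[of m n] assms by simp
  show "[:mzv2 m n:] =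
           (\<Sum>i<m. (-1) ^ i * of_nat ((n + i - 1) choose i) *
              (zeta_st (n + i) (m - i) + [:mzv2 (m - i) (n + i):] + [:zeta (m + n):]))
           + (-1) ^ m * (\<Sum>j<n. of_nat ((m + j - 1) choose j) * zeta_st (m + j) (n - j))"
    by (rule part2[OF assms])
qed

end
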